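(* Let $m\ge 3$, let $M$ be a set of $m$ parties and $p\ge 0$ an integer, and let $|\Psi\rangle=|\Psi_m^+\rangle^{\otimes p}$, where each party holds one qubit of each copy. Then $\max_{\rho\in\Gamma(\Psi)}S(\rho)=p$, where $\Gamma(\Psi)$ is the set of density operators $\rho$ on the $mp$ qubits with $\mathrm{Tr}_\alpha\rho=\mathrm{Tr}_\alpha|\Psi\rangle\langle\Psi|$ for every party $\alpha\in M$, and $S(\rho)=-\mathrm{Tr}\,\rho\log_2\rho$.
   Context: $|\Psi_m^+\rangle=\frac{1}{\sqrt2}(|0\rangle^{\otimes m}+|1\rangle^{\otimes m})$ is the $m$-qubit GHZ state. $\mathrm{Tr}_\alpha$ denotes the partial trace over all qubits held by party $\alpha$ (here, $p$ qubits). *)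

theory Defs
  imports Complex_Main "Jordan_Normal_Form.Char_Poly"
begin

(* Qubits of an N-qubit register are numbered 0..<N; computational basis state
   with index i < 2^N has qubit q in state bit q i. *)
definition bit_of :: "nat \<Rightarrow> nat \<Rightarrow> nat" where
  "bit_of q i = (i div 2 ^ q) mod 2"

definition pos_in :: "nat set \<Rightarrow> nat \<Rightarrow> nat" where
  "pos_in S q = card {x \<in> S. x < q}"

(* Full basis index obtained from an index r of the kept qubits K
   and an index t of the traced qubits T = {0..<N} - K. *)
definition merge_idx :: "nat \<Rightarrow> nat set \<Rightarrow> nat \<Rightarrow> nat \<Rightarrow> nat" where
  "merge_idx N T r t =
     (\<Sum>q<N. (if q \<in> T then bit_of (pos_in T q) t
              else bit_of (pos_in ({0..<N} - T) q) r) * 2 ^ q)"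

(* Partial trace over the qubits in T of an operator on N qubits;
   the result acts on the remaining qubits (ordered increasingly). *)
definition ptrace :: "nat \<Rightarrow> nat set \<Rightarrow> complex mat \<Rightarrow> complex mat" where
  "ptrace N T \<rho> =
     mat (2 ^ card ({0..<N} - T)) (2 ^ card ({0..<N} - T))
       (\<lambda>(r, r'). \<Sum>t < 2 ^ card T. \<rho> $$ (merge_idx N T r t, merge_idx N T r' t))"

definition density_op :: "nat \<Rightarrow> complex mat \<Rightarrow> bool" where
  "density_op N \<rho> \<longleftrightarrow> \<rho> \<in> carrier_mat (2 ^ N) (2 ^ N) \<and>
     (\<forall>v :: nat \<Rightarrow> complex.
        let q = (\<Sum>i < 2 ^ N. \<Sum>j < 2 ^ N. cnj (v i) * \<rho> $$ (i, j) * v j)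
        in Im q = 0 \<and> Re q \<ge> 0) \<and>
     (\<Sum>i < 2 ^ N. \<rho> $$ (i, i)) = 1"

(* von Neumann entropy: - sum over eigenvalues (with algebraic multiplicity,
   i.e. as roots of the characteristic polynomial) of lambda log2 lambda,
   with the convention 0 log 0 = 0. Eigenvalues of density operators are real. *)
definition xlogx :: "real \<Rightarrow> real" where
  "xlogx x = (if x = 0 then 0 else x * log 2 x)"

definition vn_entropy :: "complex mat \<Rightarrow> real" where
  "vn_entropy \<rho> = - (\<Sum>a \<in> {a. poly (char_poly \<rho>) a = 0}.
                        real (order a (char_poly \<rho>)) * xlogx (Re a))"

definition ghz_amp :: "nat \<Rightarrow> nat \<Rightarrow> complex" where
  "ghz_amp m b = (if b = 0 \<or> b = 2 ^ m - 1 then complex_of_real (1 / sqrt 2) else 0)"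

(* Layout: copy j (j < p) occupies qubits j*m .. j*m+m-1; qubit j*m + a of it
   is held by party a (a < m). Amplitudes of |GHZ_m>^{\<otimes>p} on m*p qubits. *)
definition ghz_power_amp :: "nat \<Rightarrow> nat \<Rightarrow> nat \<Rightarrow> complex" where
  "ghz_power_amp m p i = (\<Prod>j<p. ghz_amp m ((i div 2 ^ (m * j)) mod 2 ^ m))"

definition ghz_power_dm :: "nat \<Rightarrow> nat \<Rightarrow> complex mat" where
  "ghz_power_dm m p = mat (2 ^ (m * p)) (2 ^ (m * p))
     (\<lambda>(i, j). ghz_power_amp m p i * cnj (ghz_power_amp m p j))"

definition party_qubits :: "nat \<Rightarrow> nat \<Rightarrow> nat \<Rightarrow> nat set" where
  "party_qubits m p a = {j * m + a | j. j < p}"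

definition compatible_states :: "nat \<Rightarrow> nat \<Rightarrow> complex mat set" where
  "compatible_states m p = {\<rho>. density_op (m * p) \<rho> \<and>
     (\<forall>a < m. ptrace (m * p) (party_qubits m p a) \<rho> =
               ptrace (m * p) (party_qubits m p a) (ghz_power_dm m p))}"

end

theory Submission
  imports Defs "Jordan_Normal_Form.Schur_Decomposition"
begin

lemma poly_prod_linear_zero:
  "poly (\<Prod>a\<leftarrow>as. [:- a, 1:]) x = (0::complex) \<longleftrightarrow> x \<in> set as"
  by (induction as) auto

lemma order_prod_linear:
  fixes x :: complex
  shows "Polynomial.order x (\<Prod>a\<leftarrow>as. [:- a, 1:]) = count_list as x"
proof (induction as)
  case Nil
  then show ?case by (simp add: order_0I)
next
  case (Cons b as)
  have nz: "(\<Prod>a\<leftarrow>as. [:- a, 1:]) \<noteq> (0::complex poly)"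
  proof -
    obtain z :: complex where "z \<notin> set as"
      using ex_new_if_finite[OF infinite_UNIV_char_0] by blast
    then show ?thesis using poly_prod_linear_zero[of as z] by auto
  qed
  have "Polynomial.order x ([:- b, 1:] * (\<Prod>a\<leftarrow>as. [:- a, 1:])) =
        Polynomial.order x [:- b, 1:] + Polynomial.order x (\<Prod>a\<leftarrow>as. [:- a, 1:])"
  proof (rule order_mult)
    have "[:- b, 1:] \<noteq> (0::complex poly)" by simp
    then show "[:- b, 1:] * (\<Prod>a\<leftarrow>as. [:- a, 1:]) \<noteq> 0" using nz no_zero_divisors by blast
  qed
  moreover have "Polynomial.order x [:- b, 1:] = (if x = b then 1 else 0)"
  proof (cases "x = b")
    case True
    then show ?thesis using order_power_n_n[of b 1] by simp
  next
    case False
    then show ?thesis by (simp add: order_0I)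
  qed
  ultimately show ?case using Cons by simp
qed

lemma sum_list_count:
  fixes f :: "'a \<Rightarrow> 'b::comm_semiring_1"
  shows "sum_list (map f xs) = (\<Sum>x\<in>set xs. of_nat (count_list xs x) * f x)"
proof (induction xs)
  case Nil
  then show ?case by simp
next
  case (Cons a xs)
  have "(\<Sum>x\<in>set (a#xs). of_nat (count_list (a#xs) x) * f x) =
     (\<Sum>x\<in>insert a (set xs). of_nat (count_list xs x) * f x) +
     (\<Sum>x\<in>insert a (set xs). (if a = x then f x else 0))"
  proof -
    have "\<And>x. of_nat (count_list (a#xs) x) * f x = of_nat (count_list xs x) * f x + (if a = x then f x else 0)"
      by (simp add: algebra_simps)
    then show ?thesis by (simp only: sum.distrib[symmetric] list.set)
  qed
  also have "(\<Sum>x\<in>insert a (set xs). of_nat (count_list xs x) * f x) =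
      (\<Sum>x\<in>set xs. of_nat (count_list xs x) * f x)"
    by (cases "a \<in> set xs") (auto simp: insert_absorb count_list_0_iff)
  also have "(\<Sum>x\<in>insert a (set xs). (if a = x then f x else 0)) = f a"
    by (simp add: sum.delta)
  finally show ?case using Cons by (simp add: add.commute)
qed

lemma vn_entropy_list:
  assumes "char_poly A = (\<Prod>a\<leftarrow>as. [:- a, 1:])"
  shows "vn_entropy A = - sum_list (map (\<lambda>a. xlogx (Re a)) as)"
proof -
  have "{a. poly (char_poly A) a = 0} = set as"
    using assms poly_prod_linear_zero by auto
  then show ?thesis
    unfolding vn_entropy_def using assms
    by (simp add: order_prod_linear sum_list_count[of "\<lambda>a. xlogx (Re a)"])
qed

lemma trace_similar:
  fixes A B P Q :: "complex mat"
  assumes "similar_mat_wit A B P Q" "A \<in> carrier_mat n n"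
  shows "(\<Sum>i<n. A $$ (i, i)) = (\<Sum>i<n. B $$ (i, i))"
proof -
  from assms have c: "B \<in> carrier_mat n n" "P \<in> carrier_mat n n" "Q \<in> carrier_mat n n"
    and QP: "Q * P = 1\<^sub>m n" and AB: "A = P * B * Q"
    unfolding similar_mat_wit_def Let_def by auto
  have AB': "A = P * (B * Q)" using AB c by (simp add: assoc_mult_mat)
  have "(\<Sum>i<n. A $$ (i, i)) = (\<Sum>i<n. \<Sum>k<n. \<Sum>l<n. P $$ (i,k) * B $$ (k,l) * Q $$ (l,i))"
    using c unfolding AB'
    by (intro sum.cong refl) (auto simp: scalar_prod_def lessThan_atLeast0 sum_distrib_left mult_ac)
  also have "\<dots> = (\<Sum>k<n. \<Sum>i<n. \<Sum>l<n. P $$ (i,k) * B $$ (k,l) * Q $$ (l,i))"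
    by (rule sum.swap)
  also have "\<dots> = (\<Sum>k<n. \<Sum>l<n. \<Sum>i<n. P $$ (i,k) * B $$ (k,l) * Q $$ (l,i))"
    by (rule sum.cong[OF refl], rule sum.swap)
  also have "\<dots> = (\<Sum>k<n. \<Sum>l<n. B $$ (k,l) * (\<Sum>i<n. Q $$ (l,i) * P $$ (i,k)))"
    by (simp add: sum_distrib_left mult_ac)
  also have "\<dots> = (\<Sum>k<n. \<Sum>l<n. B $$ (k,l) * (Q * P) $$ (l, k))"
    using c by (intro sum.cong refl) (auto simp: scalar_prod_def lessThan_atLeast0)
  also have "\<dots> = (\<Sum>k<n. B $$ (k,k))"
    unfolding QP by (intro sum.cong refl) (simp add: if_distrib cong: if_cong)
  finally show ?thesis .
qed

lemma sum_two_point: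
  fixes g :: "nat \<Rightarrow> complex"
  assumes "i < n" "j < n" "i \<noteq> j"
  shows "(\<Sum>b<n. g b * (if b = i then c else if b = j then 1 else 0)) = g i * c + g j"
proof -
  have "(\<Sum>b<n. g b * (if b = i then c else if b = j then 1 else 0)) =
        (\<Sum>b<n. (if b = i then g i * c else 0) + (if b = j then g j else 0))"
    using assms by (intro sum.cong) auto
  also have "\<dots> = g i * c + g j" using assms by (simp add: sum.distrib)
  finally show ?thesis .
qed

lemma sum_two_point':
  fixes g :: "nat \<Rightarrow> complex"
  assumes "i < n" "j < n" "i \<noteq> j"
  shows "(\<Sum>a<n. cnj (if a = i then c else if a = j then 1 else 0) * g a) = cnj c * g i + g j"
proof -
  have "(\<Sum>a<n. cnj (if a = i then c else if a = j then 1 else 0) * g a) =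
        (\<Sum>a<n. (if a = i then cnj c * g i else 0) + (if a = j then g j else 0))"
    using assms by (intro sum.cong) auto
  also have "\<dots> = cnj c * g i + g j" using assms by (simp add: sum.distrib)
  finally show ?thesis .
qed

lemma qf_two:
  fixes M :: "complex mat" and c :: complex
  assumes "i < n" "j < n" "i \<noteq> j"
  defines "v \<equiv> (\<lambda>k. if k = i then c else if k = j then 1 else 0)"
  shows "(\<Sum>a<n. \<Sum>b<n. cnj (v a) * M $$ (a, b) * v b) =
     cnj c * (M $$ (i,i) * c + M $$ (i,j)) + (M $$ (j,i) * c + M $$ (j,j))"
proof -
  have "(\<Sum>a<n. \<Sum>b<n. cnj (v a) * M $$ (a, b) * v b) =
        (\<Sum>a<n. cnj (v a) * (\<Sum>b<n. M $$ (a, b) * v b))"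
    by (simp add: sum_distrib_left mult_ac)
  also have "\<dots> = (\<Sum>a<n. cnj (v a) * (M $$ (a,i) * c + M $$ (a,j)))"
    unfolding v_def using assms by (intro sum.cong refl arg_cong2[where f="(*)"] sum_two_point) auto
  also have "\<dots> = cnj c * (M $$ (i,i) * c + M $$ (i,j)) + (M $$ (j,i) * c + M $$ (j,j))"
    unfolding v_def by (rule sum_two_point'[OF assms(1-3)])
  finally show ?thesis .
qed

lemma qf_point:
  fixes M :: "complex mat"
  assumes "i < n"
  shows "(\<Sum>a<n. \<Sum>b<n. cnj (if a = i then 1 else 0) * M $$ (a, b) * (if b = i then 1 else 0)) = M $$ (i,i)"
proof -
  have "(\<Sum>a<n. \<Sum>b<n. cnj (if a = i then 1 else 0) * M $$ (a, b) * (if b = i then 1 else 0)) =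
        (\<Sum>a<n. if a = i then M $$ (a, i) else 0)"
  proof (rule sum.cong[OF refl])
    fix a assume "a \<in> {..<n}"
    have "(\<Sum>b<n. cnj (if a = i then 1 else 0) * M $$ (a, b) * (if b = i then 1 else 0)) =
          (\<Sum>b<n. if b = i then cnj (if a = i then 1 else 0) * M $$ (a, i) else 0)"
      by (rule sum.cong) auto
    also have "\<dots> = cnj (if a = i then 1 else 0) * M $$ (a, i)" using assms by simp
    finally show "(\<Sum>b<n. cnj (if a = i then 1 else 0) * M $$ (a, b) * (if b = i then 1 else 0)) =
        (if a = i then M $$ (a, i) else 0)" by simp
  qed
  also have "\<dots> = M $$ (i,i)" using assms by simp
  finally show ?thesis .
qed

lemma density_qf:
  assumes "density_op N \<rho>"
  shows "Im (\<Sum>a < 2 ^ N. \<Sum>b < 2 ^ N. cnj (v a) * \<rho> $$ (a, b) * v b) = 0 \<and>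
         Re (\<Sum>a < 2 ^ N. \<Sum>b < 2 ^ N. cnj (v a) * \<rho> $$ (a, b) * v b) \<ge> 0"
  using assms unfolding density_op_def Let_def by blast

lemma density_diag:
  assumes "density_op N \<rho>" "i < 2 ^ N"
  shows "Im (\<rho> $$ (i,i)) = 0 \<and> Re (\<rho> $$ (i,i)) \<ge> 0"
proof -
  show ?thesis using density_qf[OF assms(1), of "\<lambda>k. if k = i then 1 else 0"] qf_point[OF assms(2), of \<rho>] by simp
qed

lemma real_lin_zero:
  fixes \<alpha> d :: real
  assumes "\<And>t. t * \<alpha> + d \<ge> 0"
  shows "\<alpha> = 0"
proof (rule ccontr)
  assume "\<alpha> \<noteq> 0"
  have "(-(d+1)/\<alpha>) * \<alpha> + d \<ge> 0" by (rule assms)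
  with \<open>\<alpha> \<noteq> 0\<close> show False by simp
qed

lemma real_lin_zero':
  fixes \<alpha> d :: real
  assumes "\<And>t. t * \<alpha> + d = 0"
  shows "\<alpha> = 0"
  using assms[of 0] assms[of 1] by simp

lemma density_zero_row:
  assumes "density_op N \<rho>" "i < 2 ^ N" "j < 2 ^ N" "\<rho> $$ (i,i) = 0"
  shows "\<rho> $$ (i,j) = 0 \<and> \<rho> $$ (j,i) = 0"
proof (cases "i = j")
  case True then show ?thesis using assms by simp
next
  case False
  define z where "z = \<rho> $$ (i,j)"
  define w where "w = \<rho> $$ (j,i)"
  define d where "d = \<rho> $$ (j,j)"
  have q: "Im (cnj c * z + w * c + d) = 0 \<and> Re (cnj c * z + w * c + d) \<ge> 0" for c
  proof -
    have "cnj c * z + w * c + d = (\<Sum>a < 2 ^ N. \<Sum>b < 2 ^ N. cnj ((\<lambda>k. if k = i then c else if k = j then 1 else 0) a) * \<rho> $$ (a, b) * (\<lambda>k. if k = i then c else if k = j then 1 else 0) b)"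
      using qf_two[OF assms(2,3) False, where M=\<rho> and c=c] assms(4)
      by (simp add: z_def w_def d_def algebra_simps)
    then show ?thesis using density_qf[OF assms(1), of "\<lambda>k. if k = i then c else if k = j then 1 else 0"]
      by simp
  qed
  have dd: "Im d = 0" using density_diag[OF assms(1) assms(3)] d_def by simp
  have re: "Re (cnj c * z + w * c) = 0" for c
  proof -
    have "t * Re (cnj c * z + w * c) + Re d \<ge> 0" for t :: real
      using q[of "of_real t * c"] by (simp add: algebra_simps)
    then show ?thesis by (rule real_lin_zero)
  qed
  have im: "Im (cnj c * z + w * c) = 0" for c
  proof -
    have "t * Im (cnj c * z + w * c) + Im d = 0" for t :: real
      using q[of "of_real t * c"] by (simp add: algebra_simps)
    then show ?thesis by (rule real_lin_zero')
  qed
  have 1: "Re z + Re w = 0" using re[of 1] by simp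
  have 2: "Im z - Im w = 0" using re[of \<i>] by simp
  have 3: "Im z + Im w = 0" using im[of 1] by simp
  have 4: "Re w - Re z = 0" using im[of \<i>] by simp
  have "z = 0" "w = 0" using 1 2 3 4 by (simp_all add: complex_eq_iff)
  then show ?thesis using z_def w_def by simp
qed

lemma density_eigen:
  assumes "density_op N \<rho>" "poly (char_poly \<rho>) k = 0"
  shows "Im k = 0 \<and> Re k \<ge> 0"
proof -
  let ?n = "2 ^ N"
  have car: "\<rho> \<in> carrier_mat ?n ?n" using assms(1) unfolding density_op_def by simp
  have "eigenvalue \<rho> k" using eigenvalue_root_char_poly[OF car] assms(2) by simp
  then obtain v where ev: "eigenvector \<rho> v k" unfolding eigenvalue_def by blast
  then have vc: "v \<in> carrier_vec ?n" and vnz: "v \<noteq> 0\<^sub>v ?n" and eq: "\<rho> *\<^sub>v v = k \<cdot>\<^sub>v v"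
    using car unfolding eigenvector_def by auto
  define w where "w = (\<lambda>i. v $ i)"
  define S where "S = (\<Sum>a<?n. (cmod (w a))\<^sup>2)"
  have "\<exists>a<?n. v $ a \<noteq> 0"
  proof (rule ccontr)
    assume "\<not> ?thesis"
    then have "v = 0\<^sub>v ?n" using vc by (intro eq_vecI) auto
    with vnz show False by simp
  qed
  then obtain a0 where a0: "a0 < ?n" "v $ a0 \<noteq> 0" by blast
  have Spos: "S > 0" unfolding S_def
  proof (rule sum_pos2[of _ a0])
    show "(cmod (w a0))\<^sup>2 > 0" using a0 w_def by simp
  qed (use a0 in auto)
  have row: "(\<Sum>b<?n. \<rho> $$ (a, b) * w b) = k * w a" if "a < ?n" for a
  proof -
    have "(\<rho> *\<^sub>v v) $ a = k * w a" using eq that vc w_def by simp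
    moreover have "(\<rho> *\<^sub>v v) $ a = (\<Sum>b<?n. \<rho> $$ (a, b) * w b)"
      using that car vc unfolding w_def by (simp add: scalar_prod_def lessThan_atLeast0)
    ultimately show ?thesis by simp
  qed
  have "(\<Sum>a<?n. \<Sum>b<?n. cnj (w a) * \<rho> $$ (a, b) * w b) = (\<Sum>a<?n. cnj (w a) * (\<Sum>b<?n. \<rho> $$ (a, b) * w b))"
    by (simp add: sum_distrib_left mult_ac)
  also have "\<dots> = (\<Sum>a<?n. k * (w a * cnj (w a)))"
    using row by (intro sum.cong) (auto simp: mult_ac)
  also have "\<dots> = (\<Sum>a<?n. k * of_real ((cmod (w a))\<^sup>2))" by (simp only: complex_norm_square)
  also have "\<dots> = k * of_real S" unfolding S_def by (simp only: of_real_sum sum_distrib_left)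
  finally have qe: "(\<Sum>a<?n. \<Sum>b<?n. cnj (w a) * \<rho> $$ (a, b) * w b) = k * of_real S" .
  from density_qf[OF assms(1), of w] qe have "Im (k * of_real S) = 0" "Re (k * of_real S) \<ge> 0" by auto
  then show ?thesis using Spos by (simp add: zero_le_mult_iff)
qed

lemma sum_list_map_upt0: "sum_list (map f [0..<n]) = (\<Sum>i<n. f i)"
  by (induction n) auto

lemma density_trace:
  assumes "density_op N \<rho>" "char_poly \<rho> = (\<Prod>a\<leftarrow>es. [:- a, 1:])"
  shows "sum_list es = 1"
proof -
  let ?n = "2 ^ N"
  have car: "\<rho> \<in> carrier_mat ?n ?n" using assms(1) unfolding density_op_def by simp
  obtain B P Q where sd: "schur_decomposition \<rho> es = (B, P, Q)" by (cases "schur_decomposition \<rho> es") auto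
  from schur_decomposition[OF car assms(2) sd]
  have sim: "similar_mat_wit \<rho> B P Q" and dg: "diag_mat B = es" by auto
  have Bc: "B \<in> carrier_mat ?n ?n" using similar_mat_witD2[OF car sim] by auto
  have "1 = (\<Sum>i<?n. \<rho> $$ (i, i))" using assms(1) unfolding density_op_def by simp
  also have "\<dots> = (\<Sum>i<?n. B $$ (i, i))" by (rule trace_similar[OF sim car])
  also have "\<dots> = sum_list (diag_mat B)"
    using Bc unfolding diag_mat_def
    by (simp add: sum_list_map_upt0)
  finally show ?thesis using dg by simp
qed

lemma gibbs_point:
  fixes x :: real
  assumes "x \<ge> 0" "n > 0"
  shows "- xlogx x \<le> (1 / n - x + x * ln n) / ln 2"
proof (cases "x = 0")
  case True then show ?thesis using assms by (simp add: xlogx_def)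
next
  case False
  then have xp: "x > 0" using assms by simp
  have "ln (1 / (n * x)) \<le> 1 / (n * x) - 1" using xp assms by (intro ln_le_minus_one) simp
  then have "x * ln (1 / (n * x)) \<le> x * (1 / (n * x) - 1)" using xp by (intro mult_left_mono) auto
  moreover have "ln (1 / (n * x)) = - ln n - ln x" using xp assms by (simp add: ln_div ln_mult)
  ultimately have "- x * ln x \<le> 1 / n - x + x * ln n" using xp assms by (simp add: algebra_simps)
  then show ?thesis using xp False unfolding xlogx_def log_def
    by (simp add: divide_right_mono field_simps)
qed

lemma gibbs:
  fixes xs :: "real list"
  assumes "\<And>x. x \<in> set xs \<Longrightarrow> x \<ge> 0" "sum_list xs = 1"
  shows "- sum_list (map xlogx xs) \<le> log 2 (length xs)"
proof -
  define n where "n = length xs"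
  have np: "n > 0" using assms(2) n_def by (cases xs) auto
  have "- sum_list (map xlogx xs) = sum_list (map (\<lambda>x. - xlogx x) xs)"
    by (induction xs) auto
  also have "\<dots> \<le> sum_list (map (\<lambda>x. (1 / n - x + x * ln n) / ln 2) xs)"
    by (rule sum_list_mono) (use assms(1) gibbs_point np in auto)
  also have "\<dots> = (\<Sum>i<n. (1 / n - xs ! i + xs ! i * ln n) / ln 2)"
    unfolding n_def by (simp add: sum_list_sum_nth lessThan_atLeast0)
  also have "\<dots> = (n * (1 / n) - (\<Sum>i<n. xs ! i) + (\<Sum>i<n. xs ! i) * ln n) / ln 2"
    by (simp add: sum_divide_distrib[symmetric] sum.distrib sum_subtractf sum_distrib_right)
  also have "(\<Sum>i<n. xs ! i) = 1" using assms(2) unfolding n_def by (simp add: sum_list_sum_nth lessThan_atLeast0)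
  finally show ?thesis using np unfolding n_def log_def by simp
qed

lemma sum_delta_nat:
  fixes f :: "nat \<Rightarrow> complex"
  assumes "x < n"
  shows "(\<Sum>l<n. (if l = x then 1 else 0) * f l) = f x"
proof -
  have "(\<Sum>l<n. (if l = x then 1 else 0) * f l) = (\<Sum>l<n. if l = x then f x else 0)"
    by (rule sum.cong) auto
  then show ?thesis using assms by simp
qed

lemma sum_delta_nat':
  fixes f :: "nat \<Rightarrow> complex"
  assumes "x < n"
  shows "(\<Sum>l<n. f l * (if l = x then 1 else 0)) = f x"
  using sum_delta_nat[OF assms, of f] by (simp add: mult.commute)

lemma perm_exists:
  assumes "G \<subseteq> {..<n}"
  shows "\<exists>\<sigma>. (\<forall>i<n. \<sigma> i < n) \<and> inj_on \<sigma> {..<n} \<and> (\<forall>x<n. \<exists>i<n. \<sigma> i = x)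
            \<and> (\<forall>i<n. \<sigma> i \<in> G \<longleftrightarrow> i < card G)"
proof -
  define k where "k = card G"
  define H where "H = {..<n} - G"
  have fG: "finite G" using assms finite_subset by blast
  have fH: "finite H" unfolding H_def by simp
  have cH: "card H = n - k" unfolding H_def k_def using assms fG by (simp add: card_Diff_subset)
  have kn: "k \<le> n" unfolding k_def using card_mono[OF finite_lessThan assms] by simp
  obtain g1 where g1: "bij_betw g1 {0..<k} G" using ex_bij_betw_nat_finite[OF fG] k_def by blast
  obtain g2 where g2: "bij_betw g2 {0..<n-k} H" using ex_bij_betw_nat_finite[OF fH] cH by auto
  define \<sigma> where "\<sigma> i = (if i < k then g1 i else g2 (i - k))" for i
  have img: "\<sigma> i \<in> (if i < k then G else H)" if "i < n" for i
    using that bij_betwE[OF g1] bij_betwE[OF g2] unfolding \<sigma>_def by auto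
  have r1: "\<forall>i<n. \<sigma> i < n"
  proof (intro allI impI)
    fix i assume i: "i < n"
    show "\<sigma> i < n" using img[OF i] assms unfolding H_def by (auto split: if_splits)
  qed
  have r4: "\<forall>i<n. \<sigma> i \<in> G \<longleftrightarrow> i < k"
  proof (intro allI impI)
    fix i assume i: "i < n"
    show "\<sigma> i \<in> G \<longleftrightarrow> i < k" using img[OF i] unfolding H_def by (auto split: if_splits)
  qed
  have r2: "inj_on \<sigma> {..<n}"
  proof (rule inj_onI)
    fix i j assume i: "i \<in> {..<n}" and j: "j \<in> {..<n}" and e: "\<sigma> i = \<sigma> j"
    show "i = j"
    proof (cases "i < k")
      case True
      then have "j < k" using r4 e i j by (metis lessThan_iff)
      have "g1 i = g1 j" using e True \<open>j < k\<close> unfolding \<sigma>_def by simp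
      then show ?thesis using True \<open>j < k\<close> inj_onD[OF bij_betw_imp_inj_on[OF g1]] by auto
    next
      case False
      then have "\<not> j < k" using r4 e i j by (metis lessThan_iff)
      have "g2 (i - k) = g2 (j - k)" using e False \<open>\<not> j < k\<close> unfolding \<sigma>_def by simp
      then have "i - k = j - k" using False \<open>\<not> j < k\<close> i j inj_onD[OF bij_betw_imp_inj_on[OF g2]] by auto
      then show ?thesis using False \<open>\<not> j < k\<close> by simp
    qed
  qed
  have r3: "\<forall>x<n. \<exists>i<n. \<sigma> i = x"
  proof (intro allI impI)
    fix x assume x: "x < n"
    show "\<exists>i<n. \<sigma> i = x"
    proof (cases "x \<in> G")
      case True
      then obtain i where "i \<in> {0..<k}" "g1 i = x" using bij_betw_imp_surj_on[OF g1] by force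
      then show ?thesis using kn unfolding \<sigma>_def by (intro exI[of _ i]) auto
    next
      case False
      then have "x \<in> H" using x unfolding H_def by simp
      then obtain i where "i \<in> {0..<n-k}" "g2 i = x" using bij_betw_imp_surj_on[OF g2] by force
      then show ?thesis using kn unfolding \<sigma>_def by (intro exI[of _ "i + k"]) auto
    qed
  qed
  show ?thesis using r1 r2 r3 r4 k_def by blast
qed

lemma block_zero_charpoly:
  fixes \<rho> :: "complex mat"
  assumes car: "\<rho> \<in> carrier_mat n n" and G: "G \<subseteq> {..<n}"
    and z: "\<And>i j. i < n \<Longrightarrow> j < n \<Longrightarrow> i \<notin> G \<or> j \<notin> G \<Longrightarrow> \<rho> $$ (i,j) = 0"
  shows "\<exists>bs. length bs = card G \<and> char_poly \<rho> = (\<Prod>a\<leftarrow>bs @ replicate (n - card G) 0. [:- a, 1:])"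
proof -
  define k where "k = card G"
  have kn: "k \<le> n" unfolding k_def using card_mono[OF finite_lessThan G] by simp
  obtain \<sigma> where s1: "\<forall>i<n. \<sigma> i < n" and s2: "inj_on \<sigma> {..<n}" and s3: "\<forall>x<n. \<exists>i<n. \<sigma> i = x"
     and s4: "\<forall>i<n. \<sigma> i \<in> G \<longleftrightarrow> i < k"
    using perm_exists[OF G] k_def by blast
  define P :: "complex mat" where "P = mat n n (\<lambda>(i,j). if j = \<sigma> i then 1 else 0)"
  define Q :: "complex mat" where "Q = mat n n (\<lambda>(i,j). if i = \<sigma> j then 1 else 0)"
  define R where "R = mat n n (\<lambda>(i,j). \<rho> $$ (\<sigma> i, \<sigma> j))"
  have Pc: "P \<in> carrier_mat n n" and Qc: "Q \<in> carrier_mat n n" and Rc: "R \<in> carrier_mat n n"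
    unfolding P_def Q_def R_def by auto
  have PQ: "P * Q = 1\<^sub>m n"
  proof (rule eq_matI)
    fix i j assume i: "i < dim_row (1\<^sub>m n)" and j: "j < dim_col (1\<^sub>m n)"
    then have i': "i < n" and j': "j < n" by auto
    have "(P * Q) $$ (i, j) = (\<Sum>l<n. (if l = \<sigma> i then 1 else 0) * (if l = \<sigma> j then 1 else 0))"
      using i' j' Pc Qc unfolding P_def Q_def by (simp add: scalar_prod_def lessThan_atLeast0)
    also have "\<dots> = (if \<sigma> j = \<sigma> i then 1 else 0)"
      using sum_delta_nat[of "\<sigma> i" n "\<lambda>l. if l = \<sigma> j then 1 else 0"] s1 i' by simp
    also have "\<dots> = 1\<^sub>m n $$ (i, j)" using s2 i' j' by (auto dest: inj_onD)
    finally show "(P * Q) $$ (i, j) = 1\<^sub>m n $$ (i, j)" .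
  qed (use Pc Qc in auto)
  have QP: "Q * P = 1\<^sub>m n"
  proof (rule eq_matI)
    fix i j assume i: "i < dim_row (1\<^sub>m n)" and j: "j < dim_col (1\<^sub>m n)"
    then have i': "i < n" and j': "j < n" by auto
    obtain l0 where l0: "l0 < n" "\<sigma> l0 = i" using s3 i' by blast
    have "(Q * P) $$ (i, j) = (\<Sum>l<n. (if i = \<sigma> l then 1 else 0) * (if j = \<sigma> l then 1 else 0))"
      using i' j' Pc Qc unfolding P_def Q_def by (simp add: scalar_prod_def lessThan_atLeast0)
    also have "\<dots> = (\<Sum>l<n. (if l = l0 then 1 else 0) * (if j = \<sigma> l then 1 else 0))"
    proof (rule sum.cong[OF refl])
      fix l assume "l \<in> {..<n}"
      then have "(i = \<sigma> l) = (l = l0)" using l0 s2 by (auto dest: inj_onD)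
      then show "(if i = \<sigma> l then 1 else 0) * (if j = \<sigma> l then 1 else 0) =
                 (if l = l0 then 1 else 0) * (if j = \<sigma> l then (1::complex) else 0)" by simp
    qed
    also have "\<dots> = (if j = i then 1 else 0)" using sum_delta_nat[OF l0(1)] l0 by simp
    also have "\<dots> = 1\<^sub>m n $$ (i, j)" using i' j' by auto
    finally show "(Q * P) $$ (i, j) = 1\<^sub>m n $$ (i, j)" .
  qed (use Pc Qc in auto)
  define R1 where "R1 = mat n n (\<lambda>(i,j). \<rho> $$ (\<sigma> i, j))"
  have PR: "P * \<rho> = R1"
  proof (rule eq_matI)
    fix i j assume i: "i < dim_row R1" and j: "j < dim_col R1"
    then have i': "i < n" and j': "j < n" unfolding R1_def by auto
    have "(P * \<rho>) $$ (i, j) = (\<Sum>l<n. (if l = \<sigma> i then 1 else 0) * \<rho> $$ (l, j))"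
      using i' j' Pc car unfolding P_def by (simp add: scalar_prod_def lessThan_atLeast0)
    also have "\<dots> = \<rho> $$ (\<sigma> i, j)" using sum_delta_nat s1 i' by simp
    finally show "(P * \<rho>) $$ (i, j) = R1 $$ (i, j)" using i' j' unfolding R1_def by simp
  qed (use Pc car R1_def in auto)
  have RQ: "R1 * Q = R"
  proof (rule eq_matI)
    fix i j assume i: "i < dim_row R" and j: "j < dim_col R"
    then have i': "i < n" and j': "j < n" unfolding R_def by auto
    have "(R1 * Q) $$ (i, j) = (\<Sum>l<n. \<rho> $$ (\<sigma> i, l) * (if l = \<sigma> j then 1 else 0))"
      using i' j' Qc unfolding R1_def Q_def by (simp add: scalar_prod_def lessThan_atLeast0)
    also have "\<dots> = \<rho> $$ (\<sigma> i, \<sigma> j)" using sum_delta_nat' s1 j' by simp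
    finally show "(R1 * Q) $$ (i, j) = R $$ (i, j)" using i' j' unfolding R_def by simp
  qed (use Qc R_def R1_def in auto)
  have "similar_mat_wit R \<rho> P Q"
    unfolding similar_mat_wit_def Let_def using Pc Qc Rc car PQ QP PR RQ by auto
  then have cpR: "char_poly R = char_poly \<rho>"
    by (intro char_poly_similar) (auto simp: similar_mat_def)
  define A where "A = mat k k (\<lambda>(i,j). \<rho> $$ (\<sigma> i, \<sigma> j))"
  define D :: "complex mat" where "D = 0\<^sub>m (n - k) (n - k)"
  have Ac: "A \<in> carrier_mat k k" unfolding A_def by auto
  have Dc: "D \<in> carrier_mat (n-k) (n-k)" unfolding D_def by auto
  have R4: "R = four_block_mat A (0\<^sub>m k (n - k)) (0\<^sub>m (n - k) k) D"
  proof (rule eq_matI)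
    fix i j assume i: "i < dim_row (four_block_mat A (0\<^sub>m k (n - k)) (0\<^sub>m (n - k) k) D)"
      and j: "j < dim_col (four_block_mat A (0\<^sub>m k (n - k)) (0\<^sub>m (n - k) k) D)"
    then have i': "i < n" and j': "j < n" using Ac Dc kn by auto
    show "R $$ (i, j) = four_block_mat A (0\<^sub>m k (n - k)) (0\<^sub>m (n - k) k) D $$ (i, j)"
    proof (cases "i < k \<and> j < k")
      case True
      then show ?thesis using i' j' Ac Dc unfolding R_def A_def by simp
    next
      case False
      then have "\<sigma> i \<notin> G \<or> \<sigma> j \<notin> G" using s4 i' j' by auto
      then have "R $$ (i, j) = 0" using z s1 i' j' unfolding R_def by simp
      then show ?thesis using False i' j' Ac Dc kn unfolding D_def by auto
    qed
  qed (use Rc Ac Dc kn in auto)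
  obtain bs where bs: "char_poly A = (\<Prod>a\<leftarrow>bs. [:- a, 1:])" "length bs = k"
    using char_poly_factorized[OF Ac] by blast
  have cD: "char_poly D = (\<Prod>a\<leftarrow>replicate (n - k) 0. [:- a, 1:])"
  proof -
    have "upper_triangular D" unfolding D_def upper_triangular_def by auto
    then have "char_poly D = (\<Prod>a\<leftarrow>diag_mat D. [:- a, 1:])" using char_poly_upper_triangular[OF Dc] by blast
    moreover have "diag_mat D = replicate (n - k) 0" unfolding D_def diag_mat_def
      by (simp add: list_eq_iff_nth_eq)
    ultimately show ?thesis by simp
  qed
  have "char_poly R = char_poly A * char_poly D"
  proof -
    have lB: "\<exists>es. char_poly A = (\<Prod>a\<leftarrow>es. [:- a, 1:])" using bs by blast
    have lD: "\<exists>es. char_poly D = (\<Prod>a\<leftarrow>es. [:- a, 1:])" using cD by blast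
    have Cc: "0\<^sub>m k (n - k) \<in> carrier_mat k (n - k)" by simp
    show ?thesis using char_poly_0_block[OF R4 lB lD Ac Cc Dc] .
  qed
  then have "char_poly \<rho> = char_poly A * char_poly D" using cpR by metis
  also have "\<dots> = (\<Prod>a\<leftarrow>bs. [:- a, 1:]) * (\<Prod>a\<leftarrow>replicate (n - k) 0. [:- a, 1:])"
    by (simp only: bs(1) cD)
  also have "\<dots> = (\<Prod>a\<leftarrow>bs @ replicate (n - k) 0. [:- a, 1:])"
    by (simp only: map_append prod_list.append)
  finally have cp: "char_poly \<rho> = (\<Prod>a\<leftarrow>bs @ replicate (n - k) 0. [:- a, 1:])" .
  show ?thesis unfolding k_def[symmetric] using cp bs(2) by blast
qed

lemma bit_of_eq: "bit_of q i = (if bit i q then 1 else 0)"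
  unfolding bit_of_def bit_iff_odd by (simp add: mod_2_eq_odd)

lemma bit_of_le1: "bit_of q i \<le> 1"
  unfolding bit_of_eq by simp

lemma bit_of_le1': "bit_of q i \<le> Suc 0"
  using bit_of_le1 by simp

lemma bits_sum:
  assumes "\<forall>q<n. c q \<le> (1::nat)"
  shows "bit (\<Sum>q<n. c q * 2 ^ q) k \<longleftrightarrow> k < n \<and> c k = 1"
  using assms
proof (induction n arbitrary: c k)
  case 0
  then show ?case by simp
next
  case (Suc n)
  have eq: "(\<Sum>q<Suc n. c q * 2 ^ q) = c 0 + 2 * (\<Sum>q<n. c (Suc q) * 2 ^ q)"
    by (subst sum.lessThan_Suc_shift) (simp add: sum_distrib_left mult_ac)
  have c0: "c 0 \<le> 1" using Suc.prems by simp
  have IH: "bit (\<Sum>q<n. c (Suc q) * 2 ^ q) k' \<longleftrightarrow> k' < n \<and> c (Suc k') = 1" for k'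
    using Suc.IH[of "\<lambda>q. c (Suc q)" k'] Suc.prems by simp
  show ?case
  proof (cases k)
    case 0
    have "c 0 = 0 \<or> c 0 = 1" using c0 by auto
    then show ?thesis unfolding eq using 0 by (auto simp: bit_0)
  next
    case (Suc k')
    have "(c 0 + 2 * (\<Sum>q<n. c (Suc q) * 2 ^ q)) div 2 = (\<Sum>q<n. c (Suc q) * 2 ^ q)"
      using c0 by simp
    then show ?thesis unfolding eq Suc using IH[of k'] by (simp add: bit_Suc)
  qed
qed

lemma sum_bits_lt:
  assumes "\<forall>q<n. c q \<le> (1::nat)"
  shows "(\<Sum>q<n. c q * 2 ^ q) < 2 ^ n"
  using assms
proof (induction n arbitrary: c)
  case 0
  then show ?case by simp
next
  case (Suc n)
  have eq: "(\<Sum>q<Suc n. c q * 2 ^ q) = c 0 + 2 * (\<Sum>q<n. c (Suc q) * 2 ^ q)"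
    by (subst sum.lessThan_Suc_shift) (simp add: sum_distrib_left mult_ac)
  have c0: "c 0 \<le> 1" using Suc.prems by simp
  have "(\<Sum>q<n. c (Suc q) * 2 ^ q) < 2 ^ n"
    using Suc.IH[of "\<lambda>q. c (Suc q)"] Suc.prems by simp
  then show ?case unfolding eq using c0 by simp
qed

lemma bit_lt_pow:
  assumes "(x::nat) < 2 ^ n" "bit x q"
  shows "q < n"
proof -
  have "take_bit n x = x" using assms(1) by (simp add: take_bit_nat_eq_self_iff)
  then show ?thesis using assms(2) by (metis bit_take_bit_iff)
qed

lemma eq_by_bits:
  assumes "\<And>q. bit (x::nat) q \<longleftrightarrow> bit y q"
  shows "x = y"
  using assms by (simp add: bit_eq_iff)

lemma pos_in_mono:
  assumes "finite S" "x \<in> S" "y \<in> S" "x < y"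
  shows "pos_in S x < pos_in S y"
  unfolding pos_in_def
proof (rule psubset_card_mono)
  show "finite {z \<in> S. z < y}" using assms by simp
  show "{z \<in> S. z < x} \<subset> {z \<in> S. z < y}" using assms by auto
qed

lemma pos_in_lt:
  assumes "finite S" "x \<in> S"
  shows "pos_in S x < card S"
  unfolding pos_in_def
  by (rule psubset_card_mono) (use assms in auto)

lemma pos_in_inj:
  assumes "finite S"
  shows "inj_on (pos_in S) S"
proof (rule inj_onI)
  fix x y assume "x \<in> S" "y \<in> S" "pos_in S x = pos_in S y"
  then show "x = y" using pos_in_mono[OF assms] by (metis less_irrefl linorder_neqE_nat)
qed

definition enc_set :: "nat set \<Rightarrow> nat \<Rightarrow> nat" where
  "enc_set S i = (\<Sum>k<card S. bit_of (inv_into S (pos_in S) k) i * 2 ^ k)"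

lemma enc_set_bit:
  assumes "finite S" "q \<in> S"
  shows "bit (enc_set S i) (pos_in S q) \<longleftrightarrow> bit i q"
proof -
  have "bit (enc_set S i) (pos_in S q) \<longleftrightarrow>
        pos_in S q < card S \<and> bit_of (inv_into S (pos_in S) (pos_in S q)) i = 1"
    unfolding enc_set_def by (rule bits_sum) (auto simp: bit_of_le1')
  also have "inv_into S (pos_in S) (pos_in S q) = q"
    using inv_into_f_f[OF pos_in_inj[OF assms(1)] assms(2)] .
  finally show ?thesis using pos_in_lt[OF assms] by (simp add: bit_of_eq)
qed

lemma enc_set_lt: "enc_set S i < 2 ^ card S"
  unfolding enc_set_def by (rule sum_bits_lt) (auto simp: bit_of_le1')

lemma bit_merge:
  "bit (merge_idx N T r t) q \<longleftrightarrow> q < N \<and>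
     (if q \<in> T then bit t (pos_in T q) else bit r (pos_in ({0..<N} - T) q))"
proof -
  have "bit (merge_idx N T r t) q \<longleftrightarrow> q < N \<and>
     (if q \<in> T then bit_of (pos_in T q) t else bit_of (pos_in ({0..<N} - T) q) r) = 1"
    unfolding merge_idx_def by (rule bits_sum) (auto simp: bit_of_le1')
  then show ?thesis by (simp add: bit_of_eq)
qed

lemma merge_lt: "merge_idx N T r t < 2 ^ N"
  unfolding merge_idx_def by (rule sum_bits_lt) (auto simp: bit_of_le1')

lemma merge_surj:
  assumes "finite T" "i < 2 ^ N"
  shows "\<exists>r t. r < 2 ^ card ({0..<N} - T) \<and> t < 2 ^ card T \<and> merge_idx N T r t = i"
proof (intro exI conjI)
  let ?K = "{0..<N} - T"
  show "enc_set ?K i < 2 ^ card ?K" "enc_set T i < 2 ^ card T" by (rule enc_set_lt)+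
  show "merge_idx N T (enc_set ?K i) (enc_set T i) = i"
  proof (rule eq_by_bits)
    fix q
    show "bit (merge_idx N T (enc_set ?K i) (enc_set T i)) q \<longleftrightarrow> bit i q"
    proof (cases "q < N")
      case True
      then show ?thesis using enc_set_bit[OF assms(1)] enc_set_bit[of ?K q i]
        by (simp add: bit_merge)
    next
      case False
      then show ?thesis using bit_lt_pow[OF assms(2)] by (auto simp: bit_merge)
    qed
  qed
qed

definition good :: "nat \<Rightarrow> nat \<Rightarrow> nat \<Rightarrow> bool" where
  "good m p i \<longleftrightarrow> (\<forall>q<m*p. bit i q = bit i (m * (q div m)))"

lemma block_bit:
  "bit ((i div 2 ^ (m * j)) mod 2 ^ m) a \<longleftrightarrow> a < m \<and> bit (i::nat) (m * j + a)"
  by (simp add: drop_bit_eq_div[symmetric] take_bit_eq_mod[symmetric] bit_simps)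

lemma bit_pow_minus1: "bit ((2::nat) ^ m - 1) a \<longleftrightarrow> a < m"
  unfolding mask_eq_exp_minus_1[symmetric] by (simp add: bit_mask_iff)

lemma bit_pow_minus1': "bit ((2::nat) ^ m - Suc 0) a \<longleftrightarrow> a < m"
  using bit_pow_minus1 by simp

lemma block_good:
  assumes "m > 0"
  shows "((i div 2 ^ (m * j)) mod 2 ^ m = 0 \<or> (i div 2 ^ (m * j)) mod 2 ^ m = 2 ^ m - 1) \<longleftrightarrow>
         (\<forall>a<m. bit (i::nat) (m * j + a) = bit i (m * j))"
  (is "(?b = 0 \<or> ?b = _) \<longleftrightarrow> ?R")
proof
  assume "?b = 0 \<or> ?b = 2 ^ m - 1"
  then show ?R
  proof
    assume b: "?b = 0"
    have "\<not> bit i (m * j + a)" if "a < m" for a using block_bit[of i m j a] b that by simp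
    then show ?R using assms by (metis add_0_right)
  next
    assume b: "?b = 2 ^ m - 1"
    have "bit i (m * j + a)" if "a < m" for a using block_bit[of i m j a] b that
      by (simp add: bit_pow_minus1 bit_pow_minus1')
    then show ?R using assms by (metis add_0_right)
  qed
next
  assume R: ?R
  show "?b = 0 \<or> ?b = 2 ^ m - 1"
  proof (cases "bit i (m * j)")
    case True
    have "?b = 2 ^ m - 1"
    proof (rule eq_by_bits)
      fix a show "bit ?b a \<longleftrightarrow> bit ((2::nat) ^ m - 1) a"
        using R True by (auto simp: block_bit bit_pow_minus1 bit_pow_minus1')
    qed
    then show ?thesis ..
  next
    case False
    have "?b = 0"
    proof (rule eq_by_bits)
      fix a show "bit ?b a \<longleftrightarrow> bit (0::nat) a"
        using R False by (auto simp: block_bit)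
    qed
    then show ?thesis ..
  qed
qed

lemma good_blocks:
  assumes "m > 0"
  shows "good m p i \<longleftrightarrow> (\<forall>j<p. \<forall>a<m. bit i (m * j + a) = bit i (m * j))"
proof
  assume g: "good m p i"
  show "\<forall>j<p. \<forall>a<m. bit i (m * j + a) = bit i (m * j)"
  proof (intro allI impI)
    fix j a assume j: "j < p" and a: "a < m"
    have lt: "m * j + a < m * p"
    proof -
      have "m * j + a < m * j + m" using a by simp
      also have "\<dots> = m * (j + 1)" by simp
      also have "\<dots> \<le> m * p" using j by (intro mult_le_mono2) simp
      finally show ?thesis .
    qed
    have "(m * j + a) div m = j" using a assms by simp
    then show "bit i (m * j + a) = bit i (m * j)" using g lt unfolding good_def by metis
  qed
next
  assume b: "\<forall>j<p. \<forall>a<m. bit i (m * j + a) = bit i (m * j)"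
  show "good m p i" unfolding good_def
  proof (intro allI impI)
    fix q assume q: "q < m * p"
    have "q div m < p" using q assms by (simp add: div_less_iff_less_mult mult.commute)
    moreover have "q mod m < m" using assms by simp
    moreover have "q = m * (q div m) + q mod m" by simp
    ultimately show "bit i q = bit i (m * (q div m))" using b by metis
  qed
qed

lemma ghz_amp_val:
  assumes "m > 0"
  shows "ghz_power_amp m p i = (if good m p i then complex_of_real (1 / sqrt 2) ^ p else 0)"
proof (cases "good m p i")
  case True
  then have "\<forall>j<p. ghz_amp m ((i div 2 ^ (m * j)) mod 2 ^ m) = complex_of_real (1 / sqrt 2)"
    using good_blocks[OF assms] block_good[OF assms] unfolding ghz_amp_def by auto
  then show ?thesis using True unfolding ghz_power_amp_def by simp
next
  case False
  then obtain j where j: "j < p" "\<not> (\<forall>a<m. bit i (m * j + a) = bit i (m * j))"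
    using good_blocks[OF assms] by blast
  then have "ghz_amp m ((i div 2 ^ (m * j)) mod 2 ^ m) = 0"
    using block_good[OF assms, of i j] unfolding ghz_amp_def by auto
  then show ?thesis using False j unfolding ghz_power_amp_def by (auto intro: prod_zero)
qed

lemma ghz_amp_sq:
  assumes "m > 0"
  shows "ghz_power_amp m p i * cnj (ghz_power_amp m p i) =
         (if good m p i then complex_of_real ((1/2) ^ p) else 0)"
proof -
  have "complex_of_real (1 / sqrt 2) ^ p * cnj (complex_of_real (1 / sqrt 2) ^ p) =
        complex_of_real ((1 / sqrt 2) ^ p * (1 / sqrt 2) ^ p)"
    by simp
  also have "(1 / sqrt 2) ^ p * (1 / sqrt 2) ^ p = ((1::real)/2) ^ p"
    by (simp add: power_mult_distrib[symmetric] power_divide)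
  finally show ?thesis using ghz_amp_val[OF assms] by simp
qed

lemma party_mem:
  assumes "a < m"
  shows "q \<in> party_qubits m p a \<longleftrightarrow> q < m * p \<and> q mod m = a"
proof
  assume "q \<in> party_qubits m p a"
  then obtain j where j: "j < p" "q = j * m + a" unfolding party_qubits_def by blast
  have "j * m + a < j * m + m" using assms by simp
  also have "\<dots> = m * (j + 1)" by simp
  also have "\<dots> \<le> m * p" using j by (intro mult_le_mono2) simp
  finally show "q < m * p \<and> q mod m = a" using j assms by simp
next
  assume q: "q < m * p \<and> q mod m = a"
  then have "q div m < p" using assms by (simp add: div_less_iff_less_mult mult.commute)
  moreover have "q = (q div m) * m + a" using q by (metis div_mult_mod_eq)
  ultimately show "q \<in> party_qubits m p a" unfolding party_qubits_def by blast
qed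

lemma party_finite: "finite (party_qubits m p a)"
  unfolding party_qubits_def by simp

definition enc :: "nat \<Rightarrow> nat \<Rightarrow> nat \<Rightarrow> nat" where
  "enc m p k = (\<Sum>q<m*p. bit_of (q div m) k * 2 ^ q)"

definition dec :: "nat \<Rightarrow> nat \<Rightarrow> nat \<Rightarrow> nat" where
  "dec m p i = (\<Sum>j<p. bit_of (m * j) i * 2 ^ j)"

lemma enc_bit: "bit (enc m p k) q \<longleftrightarrow> q < m * p \<and> bit k (q div m)"
proof -
  have "bit (enc m p k) q \<longleftrightarrow> q < m * p \<and> bit_of (q div m) k = 1"
    unfolding enc_def by (rule bits_sum) (auto simp: bit_of_le1')
  then show ?thesis by (simp add: bit_of_eq)
qed

lemma dec_bit: "bit (dec m p i) j \<longleftrightarrow> j < p \<and> bit i (m * j)"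
proof -
  have "bit (dec m p i) j \<longleftrightarrow> j < p \<and> bit_of (m * j) i = 1"
    unfolding dec_def by (rule bits_sum) (auto simp: bit_of_le1')
  then show ?thesis by (simp add: bit_of_eq)
qed

lemma enc_lt: "enc m p k < 2 ^ (m * p)"
  unfolding enc_def by (rule sum_bits_lt) (auto simp: bit_of_le1')

lemma dec_lt: "dec m p i < 2 ^ p"
  unfolding dec_def by (rule sum_bits_lt) (auto simp: bit_of_le1')


lemma dec_enc:
  assumes "m > 0" "k < 2 ^ p"
  shows "dec m p (enc m p k) = k"
proof (rule eq_by_bits)
  fix j
  show "bit (dec m p (enc m p k)) j \<longleftrightarrow> bit k j"
    using assms bit_lt_pow[OF assms(2), of j] by (auto simp: dec_bit enc_bit)
qed

lemma enc_good:
  assumes "m > 0"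
  shows "good m p (enc m p k)"
  unfolding good_def
proof (intro allI impI)
  fix q assume q: "q < m * p"
  have "m * (q div m) \<le> q" by simp
  then have "m * (q div m) < m * p" using q by linarith
  then show "bit (enc m p k) q = bit (enc m p k) (m * (q div m))"
    using q assms by (simp add: enc_bit)
qed

lemma enc_dec:
  assumes "m > 0" "i < 2 ^ (m * p)" "good m p i"
  shows "enc m p (dec m p i) = i"
proof (rule eq_by_bits)
  fix q
  show "bit (enc m p (dec m p i)) q \<longleftrightarrow> bit i q"
  proof (cases "q < m * p")
    case True
    then have "q div m < p" using assms by (simp add: div_less_iff_less_mult mult.commute)
    then show ?thesis using True assms(3) unfolding good_def by (simp add: enc_bit dec_bit)
  next
    case False
    then show ?thesis using bit_lt_pow[OF assms(2)] by (auto simp: enc_bit)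
  qed
qed

definition goodset :: "nat \<Rightarrow> nat \<Rightarrow> nat set" where
  "goodset m p = {i \<in> {..<2 ^ (m * p)}. good m p i}"

lemma goodset_img:
  assumes "m > 0"
  shows "goodset m p = enc m p ` {..<2 ^ p}"
proof
  show "goodset m p \<subseteq> enc m p ` {..<2 ^ p}"
  proof
    fix i assume "i \<in> goodset m p"
    then have i: "i < 2 ^ (m * p)" "good m p i" unfolding goodset_def by auto
    then have "i = enc m p (dec m p i)" using enc_dec[OF assms] by simp
    then show "i \<in> enc m p ` {..<2 ^ p}" using dec_lt by blast
  qed
  show "enc m p ` {..<2 ^ p} \<subseteq> goodset m p"
    unfolding goodset_def using enc_lt enc_good[OF assms] by auto
qed

lemma goodset_card:
  assumes "m > 0"
  shows "card (goodset m p) = 2 ^ p"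
proof -
  have "inj_on (enc m p) {..<2 ^ p}"
    by (rule inj_on_inverseI[of _ "dec m p"]) (use dec_enc[OF assms] in auto)
  then show ?thesis unfolding goodset_img[OF assms] by (simp add: card_image)
qed

lemma diag_zero:
  assumes m3: "m \<ge> 3" and rho: "\<rho> \<in> compatible_states m p"
    and i: "i < 2 ^ (m * p)" and ng: "\<not> good m p i"
  shows "\<rho> $$ (i, i) = 0"
proof -
  have m0: "m > 0" using m3 by simp
  define N where "N = m * p"
  have dens: "density_op N \<rho>" using rho unfolding compatible_states_def N_def by simp
  obtain q where q: "q < N" "bit i q \<noteq> bit i (m * (q div m))"
    using ng unfolding good_def N_def by blast
  define x where "x = m * (q div m)"
  define a1 where "a1 = q mod m"
  have qx: "q = x + a1" unfolding x_def a1_def by simp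
  have a1m: "a1 < m" unfolding a1_def using m0 by simp
  have a10: "a1 \<noteq> 0"
  proof
    assume "a1 = 0"
    then have "q = x" using qx by simp
    then show False using q(2) unfolding x_def by simp
  qed
  define a where "a = (if a1 = 1 then 2 else 1::nat)"
  have am: "a < m" using m3 unfolding a_def by auto
  have a0: "a \<noteq> 0" and aa1: "a \<noteq> a1" unfolding a_def by auto
  define T where "T = party_qubits m p a"
  define K where "K = {0..<N} - T"
  have "x \<le> q" unfolding x_def by simp
  then have xN: "x < N" using q by linarith
  have xK: "x \<in> K" using xN party_mem[OF am, of x p] a0 m0 unfolding K_def T_def N_def x_def by auto
  have qK: "q \<in> K" using q party_mem[OF am, of q p] aa1 unfolding K_def T_def N_def a1_def by auto
  have xT: "x \<notin> T" and qT: "q \<notin> T" using xK qK unfolding K_def by auto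
  obtain r0 t0 where r0: "r0 < 2 ^ card K" and t0: "t0 < 2 ^ card T" and e0: "merge_idx N T r0 t0 = i"
    using merge_surj[OF _ i[folded N_def], of T] party_finite unfolding T_def K_def by blast
  have pt: "ptrace N T \<rho> = ptrace N T (ghz_power_dm m p)"
  proof -
    have "\<forall>a<m. ptrace (m * p) (party_qubits m p a) \<rho> = ptrace (m * p) (party_qubits m p a) (ghz_power_dm m p)"
      using rho unfolding compatible_states_def by simp
    then show ?thesis using am unfolding T_def N_def by simp
  qed
  define f where "f t = \<rho> $$ (merge_idx N T r0 t, merge_idx N T r0 t)" for t
  have L: "ptrace N T \<rho> $$ (r0, r0) = (\<Sum>t<2 ^ card T. f t)"
    using r0 unfolding ptrace_def K_def f_def by simp
  have R: "ptrace N T (ghz_power_dm m p) $$ (r0, r0) =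
      (\<Sum>t<2 ^ card T. ghz_power_dm m p $$ (merge_idx N T r0 t, merge_idx N T r0 t))"
    using r0 unfolding ptrace_def K_def by simp
  have Z: "ghz_power_dm m p $$ (merge_idx N T r0 t, merge_idx N T r0 t) = 0" for t
  proof -
    let ?y = "merge_idx N T r0 t"
    have yl: "?y < 2 ^ (m * p)" using merge_lt[of N T r0 t] unfolding N_def .
    have "bit ?y q = bit i q" "bit ?y x = bit i x"
      using xT qT xN q(1) unfolding e0[symmetric] by (simp_all add: bit_merge K_def)
    then have "\<not> good m p ?y" using q unfolding good_def N_def x_def by auto
    then show ?thesis using yl ghz_amp_sq[OF m0] unfolding ghz_power_dm_def by simp
  qed
  have s0: "(\<Sum>t<2 ^ card T. f t) = 0"
    using L R Z pt by simp
  have nn: "Im (f t) = 0 \<and> Re (f t) \<ge> 0" for t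
    unfolding f_def using density_diag[OF dens merge_lt] .
  have "(\<Sum>t<2 ^ card T. Re (f t)) = 0"
    using arg_cong[OF s0, of Re] by simp
  moreover have "\<forall>t\<in>{..<2 ^ card T}. Re (f t) \<ge> 0" using nn by simp
  ultimately have "\<forall>t\<in>{..<2 ^ card T}. Re (f t) = 0"
    using sum_nonneg_eq_0_iff[OF finite_lessThan, where f="\<lambda>t. Re (f t)"] by blast
  then have "Re (f t0) = 0" using t0 by simp
  then show ?thesis using nn[of t0] e0 unfolding f_def by (simp add: complex_eq_iff)
qed

lemma Re_sum_list: "Re (sum_list xs) = sum_list (map Re xs)"
  by (induction xs) auto

lemma upper_bound:
  assumes m3: "m \<ge> 3" and rho: "\<rho> \<in> compatible_states m p"
  shows "vn_entropy \<rho> \<le> real p"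
proof -
  have m0: "m > 0" using m3 by simp
  define N where "N = m * p"
  define n where "n = (2::nat) ^ N"
  have dens: "density_op N \<rho>" using rho unfolding compatible_states_def N_def by simp
  have car: "\<rho> \<in> carrier_mat n n" using dens unfolding density_op_def n_def by simp
  define G where "G = goodset m p"
  have Gs: "G \<subseteq> {..<n}" unfolding G_def goodset_def n_def N_def by auto
  have dz: "\<rho> $$ (i, i) = 0" if "i < n" "i \<notin> G" for i
    using diag_zero[OF m3 rho] that unfolding G_def goodset_def n_def N_def by auto
  have z: "\<rho> $$ (i, j) = 0" if "i < n" "j < n" "i \<notin> G \<or> j \<notin> G" for i j
  proof (cases "i \<notin> G")
    case True
    then show ?thesis using density_zero_row[OF dens, of i j] dz that unfolding n_def by blast
  next
    case False
    then have "j \<notin> G" using that by blast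
    then show ?thesis using density_zero_row[OF dens, of j i] dz that unfolding n_def by blast
  qed
  obtain bs where bs: "length bs = card G"
    and cp: "char_poly \<rho> = (\<Prod>a\<leftarrow>bs @ replicate (n - card G) 0. [:- a, 1:])"
    using block_zero_charpoly[OF car Gs z] by blast
  have ent: "vn_entropy \<rho> = - sum_list (map (\<lambda>a. xlogx (Re a)) bs)"
  proof -
    have x0: "xlogx (Re 0) = 0" "xlogx 0 = 0" by (simp_all add: xlogx_def)
    show ?thesis using vn_entropy_list[OF cp] by (simp add: x0 sum_list_replicate)
  qed
  have "sum_list (bs @ replicate (n - card G) 0) = 1" by (rule density_trace[OF dens cp])
  then have "sum_list bs = 1" by (simp add: sum_list_replicate)
  then have s1: "sum_list (map Re bs) = 1" using Re_sum_list[of bs] by simp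
  have nn: "x \<ge> 0" if xin: "x \<in> set (map Re bs)" for x
  proof -
    obtain b where b: "b \<in> set bs" "x = Re b" using xin by auto
    then have "poly (char_poly \<rho>) b = 0" unfolding cp using poly_prod_linear_zero by simp
    then show ?thesis using density_eigen[OF dens] b by blast
  qed
  have "- sum_list (map xlogx (map Re bs)) \<le> log 2 (length (map Re bs))"
    by (rule gibbs[OF nn s1])
  moreover have "map xlogx (map Re bs) = map (\<lambda>a. xlogx (Re a)) bs" by (simp add: comp_def)
  moreover have "length (map Re bs) = 2 ^ p" using bs goodset_card[OF m0] unfolding G_def by simp
  ultimately have "vn_entropy \<rho> \<le> log 2 (2 ^ p)" using ent by (simp only:) simp
  also have "log 2 (2 ^ p) = real p" by (simp add: log_nat_power)
  finally show ?thesis .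
qed

lemma good_agree:
  assumes m0: "m > 0" and am: "a < m" and x: "x < 2 ^ (m * p)" and y: "y < 2 ^ (m * p)"
    and gx: "good m p x" and gy: "good m p y"
    and agree: "\<And>q. q \<in> party_qubits m p a \<Longrightarrow> bit x q = bit y q"
  shows "x = y"
proof (rule eq_by_bits)
  fix q
  show "bit x q \<longleftrightarrow> bit y q"
  proof (cases "q < m * p")
    case True
    define j where "j = q div m"
    have jp: "j < p" using True m0 unfolding j_def by (simp add: div_less_iff_less_mult mult.commute)
    define q' where "q' = m * j + a"
    have "q' < m * j + m" using am unfolding q'_def by simp
    also have "\<dots> = m * (j + 1)" by simp
    also have "\<dots> \<le> m * p" using jp by (intro mult_le_mono2) simp
    finally have q'lt: "q' < m * p" .
    have q'div: "q' div m = j" unfolding q'_def using am m0 by simp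
    have q'mod: "q' mod m = a" unfolding q'_def using am by simp
    have q'T: "q' \<in> party_qubits m p a" using party_mem[OF am] q'lt q'mod by simp
    have "bit x q = bit x (m * j)" using gx True unfolding good_def j_def by blast
    also have "\<dots> = bit x q'" using gx q'lt q'div unfolding good_def by metis
    also have "\<dots> = bit y q'" using agree[OF q'T] .
    also have "\<dots> = bit y (m * j)" using gy q'lt q'div unfolding good_def by metis
    also have "\<dots> = bit y q" using gy True unfolding good_def j_def by metis
    finally show ?thesis by simp
  next
    case False
    then show ?thesis using bit_lt_pow[OF x] bit_lt_pow[OF y] by blast
  qed
qed

lemma lower_bound:
  assumes m3: "m \<ge> 3"
  shows "\<exists>\<rho> \<in> compatible_states m p. vn_entropy \<rho> = real p"
proof -
  have m0: "m > 0" using m3 by simp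
  define N where "N = m * p"
  define n where "n = (2::nat) ^ N"
  define dv where "dv i = (if good m p i then ((1::real)/2) ^ p else 0)" for i
  define \<rho> where "\<rho> = mat n n (\<lambda>(i,j). if i = j then complex_of_real (dv i) else 0)"
  have car: "\<rho> \<in> carrier_mat n n" unfolding \<rho>_def by simp
  have dvnn: "dv i \<ge> 0" for i unfolding dv_def by simp
  have sumdv: "(\<Sum>i<n. f (dv i)) = 2 ^ p * f ((1/2) ^ p)" if f0: "f 0 = 0" for f :: "real \<Rightarrow> 'a::comm_ring_1"
  proof -
    have "(\<Sum>i<n. f (dv i)) = (\<Sum>i<n. if good m p i then f ((1/2)^p) else 0)"
      unfolding dv_def using f0 by (intro sum.cong) auto
    also have "\<dots> = (\<Sum>i\<in>goodset m p. f ((1/2)^p))"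
      unfolding goodset_def n_def N_def by (rule sum.inter_filter[OF finite_lessThan, symmetric])
    also have "\<dots> = 2 ^ p * f ((1/2) ^ p)" using goodset_card[OF m0] by simp
    finally show ?thesis .
  qed
  have dens: "density_op N \<rho>"
    unfolding density_op_def
  proof (intro conjI allI)
    show "\<rho> \<in> carrier_mat (2 ^ N) (2 ^ N)" using car n_def by simp
  next
    fix v :: "nat \<Rightarrow> complex"
    have "(\<Sum>a<2 ^ N. \<Sum>b<2 ^ N. cnj (v a) * \<rho> $$ (a, b) * v b) =
          (\<Sum>a<2 ^ N. complex_of_real (dv a * (cmod (v a))\<^sup>2))"
    proof (rule sum.cong[OF refl])
      fix a :: nat assume a: "a \<in> {..<2 ^ N}"
      have "(\<Sum>b<2 ^ N. cnj (v a) * \<rho> $$ (a, b) * v b) =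
            (\<Sum>b<2 ^ N. if b = a then cnj (v a) * complex_of_real (dv a) * v a else 0)"
        using a unfolding \<rho>_def n_def by (intro sum.cong) auto
      also have "\<dots> = cnj (v a) * complex_of_real (dv a) * v a" using a by simp
      also have "\<dots> = complex_of_real (dv a) * (v a * cnj (v a))" by (simp add: mult_ac)
      also have "\<dots> = complex_of_real (dv a * (cmod (v a))\<^sup>2)"
        by (simp only: complex_norm_square[symmetric] of_real_mult)
      finally show "(\<Sum>b<2 ^ N. cnj (v a) * \<rho> $$ (a, b) * v b) = complex_of_real (dv a * (cmod (v a))\<^sup>2)" .
    qed
    also have "\<dots> = complex_of_real (\<Sum>a<2 ^ N. dv a * (cmod (v a))\<^sup>2)" by (simp only: of_real_sum)
    finally have eq: "(\<Sum>a<2 ^ N. \<Sum>b<2 ^ N. cnj (v a) * \<rho> $$ (a, b) * v b) =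
        complex_of_real (\<Sum>a<2 ^ N. dv a * (cmod (v a))\<^sup>2)" .
    have "(\<Sum>a<2 ^ N. dv a * (cmod (v a))\<^sup>2) \<ge> 0" using dvnn by (intro sum_nonneg) simp
    then show "let q = \<Sum>i<2 ^ N. \<Sum>j<2 ^ N. cnj (v i) * \<rho> $$ (i, j) * v j in Im q = 0 \<and> 0 \<le> Re q"
      unfolding Let_def eq by simp
  next
    have "(\<Sum>i<2 ^ N. \<rho> $$ (i, i)) = (\<Sum>i<n. complex_of_real (dv i))"
      unfolding \<rho>_def n_def by (intro sum.cong) auto
    also have "\<dots> = 2 ^ p * complex_of_real ((1/2)^p)" by (rule sumdv) simp
    also have "\<dots> = 1" by (simp add: power_mult_distrib[symmetric] of_real_power)
    finally show "(\<Sum>i<2 ^ N. \<rho> $$ (i, i)) = 1" .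
  qed
  have pt: "ptrace N (party_qubits m p a) \<rho> = ptrace N (party_qubits m p a) (ghz_power_dm m p)"
    if am: "a < m" for a
  proof -
    define T where "T = party_qubits m p a"
    have "ptrace N T \<rho> = ptrace N T (ghz_power_dm m p)"
      unfolding ptrace_def
    proof (rule cong_mat[OF refl refl])
      fix r r' :: nat assume r: "r < 2 ^ card ({0..<N} - T)" and r': "r' < 2 ^ card ({0..<N} - T)"
      show "(case (r, r') of (r, r') \<Rightarrow> \<Sum>t<2 ^ card T. \<rho> $$ (merge_idx N T r t, merge_idx N T r' t)) =
            (case (r, r') of (r, r') \<Rightarrow> \<Sum>t<2 ^ card T. ghz_power_dm m p $$ (merge_idx N T r t, merge_idx N T r' t))"
        unfolding prod.case
      proof (rule sum.cong[OF refl])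
        fix t
        define x where "x = merge_idx N T r t"
        define y where "y = merge_idx N T r' t"
        have xl: "x < n" and yl: "y < n" unfolding x_def y_def n_def by (rule merge_lt)+
        have Lx: "\<rho> $$ (x, y) = (if x = y then complex_of_real (dv x) else 0)"
          unfolding \<rho>_def using xl yl by simp
        have Rx: "ghz_power_dm m p $$ (x, y) = ghz_power_amp m p x * cnj (ghz_power_amp m p y)"
          unfolding ghz_power_dm_def using xl yl unfolding n_def N_def by simp
        have "\<rho> $$ (x, y) = ghz_power_dm m p $$ (x, y)"
        proof (cases "x = y")
          case True
          then show ?thesis using Lx Rx ghz_amp_sq[OF m0, of p y] unfolding dv_def by simp
        next
          case False
          have "\<not> (good m p x \<and> good m p y)"
          proof
            assume g: "good m p x \<and> good m p y"
            have "bit x q = bit y q" if "q \<in> party_qubits m p a" for q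
              using that unfolding x_def y_def T_def by (simp add: bit_merge)
            then have "x = y" using good_agree[OF m0 am] xl yl g unfolding n_def N_def by blast
            then show False using False by simp
          qed
          then show ?thesis using Lx Rx False ghz_amp_val[OF m0] by auto
        qed
        then show "\<rho> $$ (merge_idx N T r t, merge_idx N T r' t) =
                   ghz_power_dm m p $$ (merge_idx N T r t, merge_idx N T r' t)"
          unfolding x_def y_def .
      qed
    qed
    then show ?thesis unfolding T_def .
  qed
  have comp: "\<rho> \<in> compatible_states m p"
    unfolding compatible_states_def using dens pt unfolding N_def by simp
  have ut: "upper_triangular \<rho>" unfolding upper_triangular_def \<rho>_def by simp
  have cp: "char_poly \<rho> = (\<Prod>a\<leftarrow>diag_mat \<rho>. [:- a, 1:])"
    by (rule char_poly_upper_triangular[OF car ut])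
  have "vn_entropy \<rho> = - sum_list (map (\<lambda>a. xlogx (Re a)) (diag_mat \<rho>))"
    by (rule vn_entropy_list[OF cp])
  also have "sum_list (map (\<lambda>a. xlogx (Re a)) (diag_mat \<rho>)) = (\<Sum>i<n. xlogx (dv i))"
    unfolding diag_mat_def using car
    by (simp add: sum_list_map_upt0 comp_def \<rho>_def)
  also have "\<dots> = 2 ^ p * xlogx ((1/2) ^ p)" by (rule sumdv) (simp add: xlogx_def)
  also have "\<dots> = - real p"
    by (simp add: xlogx_def log_nat_power power_mult_distrib[symmetric] log_divide)
  finally have "vn_entropy \<rho> = real p" by simp
  then show ?thesis using comp by blast
qed

theorem mainTheorem9:
  fixes m p :: nat
  assumes "m \<ge> 3"
  shows "(\<exists>\<rho> \<in> compatible_states m p. vn_entropy \<rho> = real p) \<and>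
         (\<forall>\<rho> \<in> compatible_states m p. vn_entropy \<rho> \<le> real p)"
  using lower_bound[OF assms] upper_bound[OF assms] by blast

end
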